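(* Let $n\ge 2$, let $\mathbb{F}_q$ be a finite field with $q$ elements, and let $V$ be an $n$-dimensional vector space over $\mathbb{F}_q$. Let $\mathcal{F}$ be the set of complete flags $V_*=(V_0\subset V_1\subset\dots\subset V_n)$ in $V$ with $\dim V_k=k$ for $k\in[0,n]$. Let $\mathcal{H}$ be the $\mathbb{C}$-vector space of functions $\mathcal{F}\times\mathcal{F}\to\mathbb{C}$ constant on the orbits of the diagonal action of $GL(V)$, with multiplication $(f*f')(W_*,V_* )=\sum_{V'_*\in\mathcal{F}}f(W_*,V'_* )f'(V'_*,V_* )$. Define $f_1\in\mathcal{H}$ by: $f_1(W_*,V'_* )=1$ if there exists $g\in[1,n]$ with $W_r=V'_r$ for $r\in[1,g-1]$ and $V'_r\ne W_r\subset V'_{r+1}$ for $r\in[g,n-1]$; and $f_1(W_*,V'_* )=0$ otherwise. For $t\in[0,n]$ let $X_t\subset\mathcal{F}\times\mathcal{F}$ be the set of pairs $(V'_*,V_* )$ for which there exists a sequence $1\le i_1<i_2<\dots<i_{n-t}\le n$ with $V'_r\subset V_{i_r}$ and $V'_r\not\subset V_{i_r-1}$ for all $r\in[1,n-t]$, and let $f_t\in\mathcal{H}$ be the indicator function of $X_t$ (for $t=1$ this coincides with $f_1$ above). Then for every $t\in[1,n-1]$, $$f_1*f_t=(1+q+q^2+\dots+q^{t-1})f_t+q^tf_{t+1}.$$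
   Context: For integers $a,b$, $[a,b]$ denotes the set of integers $c$ with $a\le c\le b$. $GL(V)$ acts on $\mathcal{F}$ by $gV_*=(gV_0\subset gV_1\subset\dots\subset gV_n)$ and on $\mathcal{F}\times\mathcal{F}$ diagonally. *)

theory Defs
  imports "HOL-Analysis.Analysis"
begin

text \<open>A complete flag is a function k \<mapsto> V_k, with V_k a subspace
of dimension k for k in [0,n], V_k contained in V_(k+1), and normalised to the empty set
for k > n (so that flags correspond bijectively to such functions).\<close>

definition flags :: "(nat \<Rightarrow> ('a::field ^ 'n) set) set" where
  "flags = {V. (\<forall>k\<le>CARD('n). vec.subspace (V k) \<and> vec.dim (V k) = k)
               \<and> (\<forall>k<CARD('n). V k \<subseteq> V (Suc k))
               \<and> (\<forall>k>CARD('n). V k = {})}"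

definition hconv ::
  "((nat \<Rightarrow> ('a::field ^ 'n) set) \<Rightarrow> (nat \<Rightarrow> ('a ^ 'n) set) \<Rightarrow> complex) \<Rightarrow>
   ((nat \<Rightarrow> ('a ^ 'n) set) \<Rightarrow> (nat \<Rightarrow> ('a ^ 'n) set) \<Rightarrow> complex) \<Rightarrow>
   (nat \<Rightarrow> ('a ^ 'n) set) \<Rightarrow> (nat \<Rightarrow> ('a ^ 'n) set) \<Rightarrow> complex" where
  "hconv f f' W V = (\<Sum>V'\<in>flags. f W V' * f' V' V)"

definition hf1 :: "(nat \<Rightarrow> ('a::field ^ 'n) set) \<Rightarrow> (nat \<Rightarrow> ('a ^ 'n) set) \<Rightarrow> complex" where
  "hf1 W V' = (if \<exists>g\<in>{1..CARD('n)}.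
                   (\<forall>r\<in>{1..g-1}. W r = V' r)
                 \<and> (\<forall>r\<in>{g..CARD('n)-1}. V' r \<noteq> W r \<and> W r \<subseteq> V' (r+1))
               then 1 else 0)"

definition hX :: "nat \<Rightarrow> ((nat \<Rightarrow> ('a::field ^ 'n) set) \<times> (nat \<Rightarrow> ('a ^ 'n) set)) set" where
  "hX t = {(V', V). V' \<in> flags \<and> V \<in> flags \<and>
             (\<exists>i::nat \<Rightarrow> nat. strict_mono_on {1..CARD('n)-t} i
                \<and> (\<forall>r\<in>{1..CARD('n)-t}. 1 \<le> i r \<and> i r \<le> CARD('n)
                      \<and> V' r \<subseteq> V (i r) \<and> \<not> V' r \<subseteq> V (i r - 1)))}"

definition hft :: "nat \<Rightarrow> (nat \<Rightarrow> ('a::field ^ 'n) set) \<Rightarrow> (nat \<Rightarrow> ('a ^ 'n) set) \<Rightarrow> complex" where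
  "hft t V' V = (if (V', V) \<in> hX t then 1 else 0)"

end

theory Submission
  imports Defs
begin


lemma card_span_indep:
  fixes B :: "('a::{field,finite}^'n) set"
  assumes "vec.independent B"
  shows "card (vec.span B) = CARD('a) ^ card B"
proof -
  have "finite B" by simp
  then show ?thesis using assms
  proof (induction B rule: finite_induct)
    case empty
    then show ?case by simp
  next
    case (insert b B)
    have ind: "vec.independent B" and nb: "b \<notin> vec.span B"
      using insert.prems insert.hyps vec.independent_insert[of b B] by auto
    have e: "vec.span (insert b B) = (\<lambda>(k,y). k *s b + y) ` (UNIV \<times> vec.span B)"
    proof safe
      fix x assume "x \<in> vec.span (insert b B)"
      then obtain k where "x - k *s b \<in> vec.span B" using vec.span_breakdown_eq by blast
      then show "x \<in> (\<lambda>(k,y). k *s b + y) ` (UNIV \<times> vec.span B)"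
        by (intro image_eqI[of _ _ "(k, x - k *s b)"]) auto
    next
      fix k y assume "y \<in> vec.span B"
      then show "k *s b + y \<in> vec.span (insert b B)"
        by (meson insertI1 subsetD subset_insertI vec.span_add vec.span_base vec.span_mono vec.span_scale)
    qed
    have i: "inj_on (\<lambda>(k,y). k *s b + y) (UNIV \<times> vec.span B)"
    proof (rule inj_onI, clarify)
      fix k y k' y' assume y: "y \<in> vec.span B" "y' \<in> vec.span B" and e: "k *s b + y = k' *s b + y'"
      show "k = k' \<and> y = y'"
      proof (cases "k = k'")
        case True then show ?thesis using e by simp
      next
        case False
        have "(k - k') *s b = y' - y" using e by (simp add: algebra_simps)
        then have "(k - k') *s b \<in> vec.span B" using y vec.span_diff by simp
        then have "inverse (k - k') *s ((k - k') *s b) \<in> vec.span B" by (rule vec.span_scale)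
        moreover have "inverse (k - k') *s ((k - k') *s b) = b"
          using False by (simp only: vec.scale_scale) simp
        ultimately have "b \<in> vec.span B" by simp
        then show ?thesis using nb by simp
      qed
    qed
    have "card (vec.span (insert b B)) = card ((UNIV::'a set) \<times> vec.span B)"
      by (simp only: e card_image[OF i])
    also have "\<dots> = CARD('a) * CARD('a) ^ card B" using insert.IH[OF ind] by (simp add: card_cartesian_product)
    finally show ?case using insert.hyps by simp
  qed
qed

lemma card_subspace:
  fixes S :: "('a::{field,finite}^'n) set"
  assumes "vec.subspace S"
  shows "card S = CARD('a) ^ vec.dim S"
proof -
  obtain B where B: "B \<subseteq> S" "vec.independent B" "S \<subseteq> vec.span B" "card B = vec.dim S"
    using vec.basis_exists[of S] by blast
  have "vec.span B = S" using B assms vec.span_subspace by blast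
  then show ?thesis using card_span_indep[OF B(2)] B(4) by simp
qed



definition jdx :: "(nat \<Rightarrow> ('a::field^'n) set) \<Rightarrow> ('a^'n) set \<Rightarrow> nat" where
  "jdx B U = (LEAST i. U \<subseteq> B i)"

definition okc :: "(nat \<Rightarrow> ('a::field^'n) set) \<Rightarrow> (nat \<Rightarrow> ('a^'n) set) \<Rightarrow> nat \<Rightarrow> bool" where
  "okc B A m = (\<forall>r. 1 \<le> r \<and> r < m \<longrightarrow> jdx B (A r) < jdx B (A (Suc r)))"

context
  fixes B :: "nat \<Rightarrow> ('a::field^'n) set"
  assumes B: "B \<in> flags"
begin

lemma fl_subspace: "k \<le> CARD('n) \<Longrightarrow> vec.subspace (B k)"
  using B unfolding flags_def by auto
lemma fl_dim: "k \<le> CARD('n) \<Longrightarrow> vec.dim (B k) = k"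
  using B unfolding flags_def by auto
lemma fl_step: "k < CARD('n) \<Longrightarrow> B k \<subseteq> B (Suc k)"
  using B unfolding flags_def by auto
lemma fl_big: "k > CARD('n) \<Longrightarrow> B k = {}"
  using B unfolding flags_def by auto

lemma fl_mono: assumes "i \<le> j" "j \<le> CARD('n)" shows "B i \<subseteq> B j"
  using assms
proof (induction j)
  case 0 then show ?case by simp
next
  case (Suc j)
  show ?case
  proof (cases "i = Suc j")
    case True then show ?thesis by simp
  next
    case False
    then have "B i \<subseteq> B j" using Suc by simp
    also have "\<dots> \<subseteq> B (Suc j)" using fl_step Suc by simp
    finally show ?thesis .
  qed
qed

lemma fl_0: "B 0 = {0}"
proof -
  have "vec.subspace (B 0)" "vec.dim (B 0) = 0" using fl_subspace fl_dim by auto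
  then show ?thesis using vec.subspace_0 vec.dim_eq_0 by blast
qed

lemma fl_n: "B CARD('n) = UNIV"
proof -
  have "vec.subspace (B CARD('n))" "vec.dim (B CARD('n)) = CARD('n)" using fl_subspace fl_dim by auto
  then show ?thesis using vec.subspace_dim_equal[of "B CARD('n)" UNIV] vec_dim_card
    by (metis subset_UNIV vec.subspace_UNIV order_refl)
qed

lemma jdx_sub: "U \<subseteq> B (jdx B U)"
  unfolding jdx_def by (rule LeastI[of _ "CARD('n)"]) (simp add: fl_n)

lemma jdx_le_n: "jdx B U \<le> CARD('n)"
  unfolding jdx_def by (rule Least_le) (simp add: fl_n)

lemma jdx_le: "U \<subseteq> B i \<Longrightarrow> jdx B U \<le> i"
  unfolding jdx_def by (rule Least_le)

lemma jdx_iff: "i \<le> CARD('n) \<Longrightarrow> U \<subseteq> B i \<longleftrightarrow> jdx B U \<le> i"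
  using jdx_le jdx_sub fl_mono by blast

lemma jdx_pos: assumes "\<not> U \<subseteq> {0}" shows "1 \<le> jdx B U"
proof (rule ccontr)
  assume "\<not> 1 \<le> jdx B U"
  then have "jdx B U = 0" by simp
  then show False using jdx_sub[of U] fl_0 assms by simp
qed

end

lemma flag_not0:
  assumes "A \<in> flags" "1 \<le> r" "r \<le> CARD('n)"
  shows "\<not> (A r :: ('a::field^'n) set) \<subseteq> {0}"
proof
  assume "A r \<subseteq> {0}"
  then have "vec.dim (A r) = 0" by (simp only: vec.dim_eq_0)
  then show False using fl_dim[OF assms(1) assms(3)] assms(2) by simp
qed

lemma strict_mono_on_consec:
  fixes f :: "nat \<Rightarrow> nat"
  assumes "\<forall>r. 1 \<le> r \<and> r < m \<longrightarrow> f r < f (Suc r)"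
  shows "strict_mono_on {1..m} f"
proof (rule strict_mono_onI)
  fix r s assume rs: "r \<in> {1..m}" "s \<in> {1..m}" "r < s"
  have "\<And>d. r + Suc d \<le> m \<Longrightarrow> f r < f (r + Suc d)"
  proof -
    fix d show "r + Suc d \<le> m \<Longrightarrow> f r < f (r + Suc d)"
    proof (induction d)
      case 0 then show ?case using assms rs by auto
    next
      case (Suc d)
      then have "f r < f (r + Suc d)" by simp
      also have "\<dots> < f (Suc (r + Suc d))" using assms Suc.prems rs by auto
      finally show ?case by simp
    qed
  qed
  from this[of "s - r - 1"] rs show "f r < f s" by auto
qed

lemma hX_iff:
  fixes A B :: "nat \<Rightarrow> ('a::field^'n) set"
  assumes A: "A \<in> flags" and B: "B \<in> flags" and t: "t \<le> CARD('n)"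
  shows "(A, B) \<in> hX t \<longleftrightarrow> okc B A (CARD('n) - t)"
proof
  assume "(A, B) \<in> hX t"
  then obtain i where i: "strict_mono_on {1..CARD('n)-t} i"
    "\<forall>r\<in>{1..CARD('n)-t}. 1 \<le> i r \<and> i r \<le> CARD('n) \<and> A r \<subseteq> B (i r) \<and> \<not> A r \<subseteq> B (i r - 1)"
    unfolding hX_def by auto
  have ij: "i r = jdx B (A r)" if "r \<in> {1..CARD('n)-t}" for r
  proof -
    have "jdx B (A r) \<le> i r" using i(2) that jdx_le[OF B] by blast
    moreover have "\<not> jdx B (A r) \<le> i r - 1" using i(2) that jdx_iff[OF B, of "i r - 1" "A r"] by force
    ultimately show ?thesis by simp
  qed
  show "okc B A (CARD('n) - t)" unfolding okc_def
  proof (intro allI impI)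
    fix r assume r: "1 \<le> r \<and> r < CARD('n) - t"
    then have "i r < i (Suc r)" using i(1) unfolding strict_mono_on_def by auto
    then show "jdx B (A r) < jdx B (A (Suc r))" using ij r by auto
  qed
next
  assume ok: "okc B A (CARD('n) - t)"
  show "(A, B) \<in> hX t" unfolding hX_def
  proof (clarify, intro conjI exI[of _ "\<lambda>r. jdx B (A r)"] A B)
    show "strict_mono_on {1..CARD('n) - t} (\<lambda>r. jdx B (A r))"
      using ok unfolding okc_def by (intro strict_mono_on_consec) auto
    show "\<forall>r\<in>{1..CARD('n) - t}. 1 \<le> jdx B (A r) \<and> jdx B (A r) \<le> CARD('n) \<and> A r \<subseteq> B (jdx B (A r)) \<and> \<not> A r \<subseteq> B (jdx B (A r) - 1)"
    proof
      fix r assume r: "r \<in> {1..CARD('n) - t}"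
      have p: "1 \<le> jdx B (A r)" using jdx_pos[OF B] flag_not0[OF A, of r] r by auto
      moreover have "\<not> A r \<subseteq> B (jdx B (A r) - 1)"
      proof
        assume "A r \<subseteq> B (jdx B (A r) - 1)"
        moreover have "jdx B (A r) - 1 \<le> CARD('n)" using jdx_le_n[OF B, of "A r"] by simp
        ultimately have "jdx B (A r) \<le> jdx B (A r) - 1" using jdx_iff[OF B] by blast
        then show False using p by simp
      qed
      ultimately show "1 \<le> jdx B (A r) \<and> jdx B (A r) \<le> CARD('n) \<and> A r \<subseteq> B (jdx B (A r)) \<and> \<not> A r \<subseteq> B (jdx B (A r) - 1)"
        using jdx_le_n[OF B] jdx_sub[OF B] by auto
    qed
  qed
qed



definition phi :: "(nat \<Rightarrow> ('a::field^'n) set) \<Rightarrow> nat \<Rightarrow> 'a^'n \<Rightarrow> nat \<Rightarrow> ('a^'n) set" where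
  "phi W g v r = (if r < g then W r else if r \<le> CARD('n) then vec.span (insert v (W (r - 1))) else {})"

lemma dim_span_insert:
  fixes S :: "('a::field^'n) set"
  assumes "vec.subspace S" "v \<notin> S"
  shows "vec.dim (vec.span (insert v S)) = vec.dim S + 1"
proof -
  have "v \<notin> vec.span S" using assms vec.span_eq_iff by blast
  then show ?thesis by (simp add: vec.dim_insert)
qed

lemma sub_eq_dim:
  fixes X Y :: "('a::field^'n) set"
  assumes "vec.subspace X" "vec.subspace Y" "X \<subseteq> Y" "vec.dim X = vec.dim Y"
  shows "X = Y"
  using vec.subspace_dim_equal assms by (metis order_refl)

lemma span_insert_eq:
  fixes X :: "('a::field^'n) set"
  assumes "u \<in> vec.span (insert v X)" "v \<in> vec.span (insert u X)"
  shows "vec.span (insert u X) = vec.span (insert v X)"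
proof
  show "vec.span (insert u X) \<subseteq> vec.span (insert v X)"
    using assms(1) by (intro vec.span_minimal) (auto intro: vec.span_base)
  show "vec.span (insert v X) \<subseteq> vec.span (insert u X)"
    using assms(2) by (intro vec.span_minimal) (auto intro: vec.span_base)
qed

lemma span_insert_subset:
  fixes X :: "('a::field^'n) set"
  assumes "vec.subspace Y" "v \<in> Y" "X \<subseteq> Y"
  shows "vec.span (insert v X) \<subseteq> Y"
  using assms by (intro vec.span_minimal) auto

context
  fixes W :: "nat \<Rightarrow> ('a::field^'n) set"
  assumes W: "W \<in> flags"
begin

lemma phi_flag:
  assumes g: "1 \<le> g" "g < CARD('n)" and v: "v \<notin> W (CARD('n) - 1)"
  shows "phi W g v \<in> flags"
proof -
  have vW: "v \<notin> W k" if "k \<le> CARD('n) - 1" for k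
    using v fl_mono[OF W that] by auto
  have sub: "vec.subspace (phi W g v k)" if "k \<le> CARD('n)" for k
    using that fl_subspace[OF W] unfolding phi_def by auto
  have dim: "vec.dim (phi W g v k) = k" if "k \<le> CARD('n)" for k
  proof (cases "k < g")
    case True then show ?thesis using that fl_dim[OF W] unfolding phi_def by auto
  next
    case False
    then have "vec.dim (phi W g v k) = vec.dim (vec.span (insert v (W (k - 1))))"
      using that unfolding phi_def by auto
    also have "\<dots> = vec.dim (W (k - 1)) + 1"
      using that by (intro dim_span_insert fl_subspace[OF W] vW) auto
    also have "\<dots> = k" using that False g fl_dim[OF W, of "k - 1"] by auto
    finally show ?thesis .
  qed
  have step: "phi W g v k \<subseteq> phi W g v (Suc k)" if "k < CARD('n)" for k
  proof -
    consider "Suc k < g" | "Suc k = g" | "g \<le> k" by linarith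
    then show ?thesis
    proof cases
      case 1 then show ?thesis using fl_step[OF W] that unfolding phi_def by auto
    next
      case 2 then show ?thesis using that vec.span_superset[of "insert v (W k)"] unfolding phi_def by auto
    next
      case 3
      have "W (k - 1) \<subseteq> W k" using fl_mono[OF W, of "k - 1" k] that by auto
      then show ?thesis using that 3 vec.span_mono[of "insert v (W (k-1))" "insert v (W k)"]
        unfolding phi_def by auto
    qed
  qed
  have big: "phi W g v k = {}" if "k > CARD('n)" for k
    using that g unfolding phi_def by auto
  show ?thesis unfolding flags_def using sub dim step big by auto
qed

lemma phi_hf1:
  assumes g: "1 \<le> g" "g < CARD('n)" and v: "v \<notin> W (CARD('n) - 1)"
  shows "hf1 W (phi W g v) = 1"
proof -
  have vW: "v \<notin> W k" if "k \<le> CARD('n) - 1" for k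
    using v fl_mono[OF W that] by auto
  have "(\<forall>r\<in>{1..g-1}. W r = phi W g v r)
      \<and> (\<forall>r\<in>{g..CARD('n)-1}. phi W g v r \<noteq> W r \<and> W r \<subseteq> phi W g v (r+1))"
  proof (intro conjI ballI)
    fix r assume "r \<in> {1..g-1}" then show "W r = phi W g v r" unfolding phi_def by auto
  next
    fix r assume r: "r \<in> {g..CARD('n)-1}"
    have "v \<in> phi W g v r" using r g unfolding phi_def by (auto intro: vec.span_base)
    then show "phi W g v r \<noteq> W r" using vW[of r] r by auto
    show "W r \<subseteq> phi W g v (r+1)" using r g vec.span_superset[of "insert v (W r)"] unfolding phi_def by auto
  qed
  then show ?thesis unfolding hf1_def using g by (intro if_P bexI[of _ g]) auto
qed

lemma hf1_W: "hf1 W W = 1"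
proof -
  have "CARD('n) \<in> {1..CARD('n)}" by simp
  then show ?thesis unfolding hf1_def by (intro if_P bexI[of _ "CARD('n)"]) auto
qed

lemma phi_neq_W:
  assumes g: "1 \<le> g" "g < CARD('n)" and v: "v \<notin> W (CARD('n) - 1)"
  shows "phi W g v g \<noteq> W g"
proof -
  have "v \<in> phi W g v g" using g unfolding phi_def by (auto intro: vec.span_base)
  moreover have "W g \<subseteq> W (CARD('n) - 1)" using fl_mono[OF W, of g "CARD('n) - 1"] g by simp
  then have "v \<notin> W g" using v by blast
  ultimately show ?thesis by auto
qed

lemma phi_inj_g:
  assumes g: "1 \<le> g" "g < CARD('n)" and v: "v \<notin> W (CARD('n) - 1)"
    and g': "1 \<le> g'" "g' < CARD('n)" and v': "v' \<notin> W (CARD('n) - 1)"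
    and e: "phi W g v = phi W g' v'"
  shows "g = g'"
proof (rule ccontr)
  assume "g \<noteq> g'"
  then consider "g < g'" | "g' < g" by linarith
  then show False
  proof cases
    case 1
    then have "phi W g' v' g = W g" unfolding phi_def by simp
    then show False using phi_neq_W[OF g v] e by simp
  next
    case 2
    then have "phi W g v g' = W g'" unfolding phi_def by simp
    then show False using phi_neq_W[OF g' v'] e by simp
  qed
qed

lemma phi_fiber:
  assumes g: "1 \<le> g" "g < CARD('n)" and v: "v \<notin> W (CARD('n) - 1)"
  shows "{u. u \<notin> W (CARD('n) - 1) \<and> phi W g u = phi W g v}
         = vec.span (insert v (W (g - 1))) - W (g - 1)"
proof safe
  fix u assume u: "u \<notin> W (CARD('n) - 1)" and e: "phi W g u = phi W g v"
  have "phi W g u g = phi W g v g" using e by simp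
  then have "vec.span (insert u (W (g - 1))) = vec.span (insert v (W (g - 1)))"
    using g unfolding phi_def by simp
  then show "u \<in> vec.span (insert v (W (g - 1)))" by (metis insertI1 vec.span_base)
  assume "u \<in> W (g - 1)"
  moreover have "W (g - 1) \<subseteq> W (CARD('n) - 1)" using fl_mono[OF W, of "g - 1" "CARD('n) - 1"] g by simp
  ultimately show False using u by blast
next
  fix u assume u: "u \<in> vec.span (insert v (W (g - 1)))" "u \<notin> W (g - 1)"
  have sS: "vec.subspace (W (g - 1))" using fl_subspace[OF W] g by simp
  have uS: "u \<notin> vec.span (W (g - 1))" using u(2) sS vec.span_eq_iff by blast
  have vu: "v \<in> vec.span (insert u (W (g - 1)))" using vec.in_span_insert[OF u(1) uS] .
  have mono: "vec.span (insert x (W (g - 1))) \<subseteq> vec.span (insert x (W (k - 1)))" if "g \<le> k" "k \<le> CARD('n)" for x k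
  proof -
    have "W (g - 1) \<subseteq> W (k - 1)" using fl_mono[OF W, of "g - 1" "k - 1"] that by simp
    then show ?thesis by (intro vec.span_mono) auto
  qed
  show "phi W g u = phi W g v"
  proof
    fix r
    show "phi W g u r = phi W g v r"
    proof (cases "g \<le> r \<and> r \<le> CARD('n)")
      case True
      have "u \<in> vec.span (insert v (W (r - 1)))" using u(1) mono[of r v] True by auto
      moreover have "v \<in> vec.span (insert u (W (r - 1)))" using vu mono[of r u] True by auto
      ultimately show ?thesis using span_insert_eq True unfolding phi_def by auto
    next
      case False then show ?thesis unfolding phi_def by auto
    qed
  qed
  show "u \<in> W (CARD('n) - 1) \<Longrightarrow> False"
  proof -
    assume uW: "u \<in> W (CARD('n) - 1)"
    have sN: "vec.subspace (W (CARD('n) - 1))" using fl_subspace[OF W] by simp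
    have "W (g - 1) \<subseteq> W (CARD('n) - 1)" using fl_mono[OF W, of "g - 1" "CARD('n) - 1"] g by auto
    then have "vec.span (insert u (W (g - 1))) \<subseteq> W (CARD('n) - 1)"
      using span_insert_subset[OF sN uW] by blast
    then show False using vu v by auto
  qed
qed

end


lemma hf1_cases:
  fixes W V' :: "nat \<Rightarrow> ('a::field^'n) set"
  assumes W: "W \<in> flags" and V': "V' \<in> flags" and h: "hf1 W V' = 1" and ne: "V' \<noteq> W"
  shows "\<exists>g v. 1 \<le> g \<and> g < CARD('n) \<and> v \<notin> W (CARD('n) - 1) \<and> V' = phi W g v"
proof -
  obtain g where g: "g \<in> {1..CARD('n)}" and eq: "\<forall>r\<in>{1..g-1}. W r = V' r"
    and cnd: "\<forall>r\<in>{g..CARD('n)-1}. V' r \<noteq> W r \<and> W r \<subseteq> V' (r+1)"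
    using h unfolding hf1_def by (auto split: if_splits)
  have gn: "g < CARD('n)"
  proof (rule ccontr)
    assume "\<not> g < CARD('n)"
    then have gN: "g = CARD('n)" using g by auto
    have "V' = W"
    proof
      fix r
      consider "r = 0" | "1 \<le> r \<and> r \<le> CARD('n) - 1" | "r = CARD('n)" | "r > CARD('n)" by linarith
      then show "V' r = W r"
      proof cases
        case 1 then show ?thesis using fl_0[OF W] fl_0[OF V'] by simp
      next
        case 2 then show ?thesis using eq gN by auto
      next
        case 3 then show ?thesis using fl_n[OF W] fl_n[OF V'] by simp
      next
        case 4 then show ?thesis using fl_big[OF W] fl_big[OF V'] by simp
      qed
    qed
    then show False using ne by simp
  qed
  have g1: "1 \<le> g" using g by simp
  define S where "S = W (g - 1)"
  have sS: "vec.subspace S" using fl_subspace[OF W] gn unfolding S_def by simp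
  have dS: "vec.dim S = g - 1" using fl_dim[OF W] gn unfolding S_def by simp
  have sVg: "vec.subspace (V' g)" using fl_subspace[OF V'] gn by simp
  have dVg: "vec.dim (V' g) = g" using fl_dim[OF V'] gn by simp
  have SV: "S \<subseteq> V' g"
  proof (cases "g = 1")
    case True
    then show ?thesis unfolding S_def using fl_0[OF W] vec.subspace_0[OF sVg] by simp
  next
    case False
    then have "W (g - 1) = V' (g - 1)" using eq g1 by auto
    moreover have "V' (g - 1) \<subseteq> V' g" using fl_mono[OF V', of "g - 1" g] gn by simp
    ultimately show ?thesis unfolding S_def by simp
  qed
  have "\<not> V' g \<subseteq> S"
  proof
    assume "V' g \<subseteq> S"
    then have "vec.dim (V' g) \<le> vec.dim S" by (rule vec.dim_subset)
    then show False using dS dVg g1 by simp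
  qed
  then obtain v where v: "v \<in> V' g" "v \<notin> S" by blast
  have claim: "V' (g + d) = vec.span (insert v (W (g + d - 1))) \<and> (g + d < CARD('n) \<longrightarrow> v \<notin> W (g + d))"
    if "g + d \<le> CARD('n)" for d
    using that
  proof (induction d)
    case 0
    have sp: "vec.span (insert v S) \<subseteq> V' g" using span_insert_subset[OF sVg v(1) SV] .
    have dsp: "vec.dim (vec.span (insert v S)) = g" using dim_span_insert[OF sS v(2)] dS g1 by simp
    have e: "V' g = vec.span (insert v S)" using sub_eq_dim[OF _ sVg sp] dsp dVg by simp
    have "v \<notin> W g" if "g < CARD('n)"
    proof
      assume vW: "v \<in> W g"
      have sW: "vec.subspace (W g)" using fl_subspace[OF W] gn by simp
      have "S \<subseteq> W g" using fl_mono[OF W, of "g - 1" g] gn unfolding S_def by simp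
      then have "vec.span (insert v S) \<subseteq> W g" using span_insert_subset[OF sW vW] by blast
      then have "vec.span (insert v S) = W g" using sub_eq_dim[OF _ sW] dsp fl_dim[OF W, of g] gn by simp
      then show False using e cnd gn g1 by auto
    qed
    then show ?case using e unfolding S_def by simp
  next
    case (Suc d)
    let ?r = "g + d"
    have IH: "V' ?r = vec.span (insert v (W (?r - 1)))" "v \<notin> W ?r" using Suc by auto
    have sW: "vec.subspace (W ?r)" using fl_subspace[OF W] Suc.prems by simp
    have sV1: "vec.subspace (V' (Suc ?r))" using fl_subspace[OF V'] Suc.prems by simp
    have vV1: "v \<in> V' (Suc ?r)"
    proof -
      have "v \<in> V' ?r" using IH(1) by (auto intro: vec.span_base)
      then show ?thesis using fl_step[OF V', of ?r] Suc.prems by auto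
    qed
    have WV1: "W ?r \<subseteq> V' (Suc ?r)" using cnd Suc.prems g1 by auto
    have sp: "vec.span (insert v (W ?r)) \<subseteq> V' (Suc ?r)" using span_insert_subset[OF sV1 vV1 WV1] .
    have dsp: "vec.dim (vec.span (insert v (W ?r))) = Suc ?r"
      using dim_span_insert[OF sW IH(2)] fl_dim[OF W, of ?r] Suc.prems by simp
    have e: "V' (Suc ?r) = vec.span (insert v (W ?r))"
      using sub_eq_dim[OF _ sV1 sp] dsp fl_dim[OF V', of "Suc ?r"] Suc.prems by simp
    have "v \<notin> W (Suc ?r)" if "Suc ?r < CARD('n)"
    proof
      assume vW: "v \<in> W (Suc ?r)"
      have sW1: "vec.subspace (W (Suc ?r))" using fl_subspace[OF W] that by simp
      have "W ?r \<subseteq> W (Suc ?r)" using fl_step[OF W] that by simp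
      then have "vec.span (insert v (W ?r)) \<subseteq> W (Suc ?r)" using span_insert_subset[OF sW1 vW] by blast
      then have "vec.span (insert v (W ?r)) = W (Suc ?r)"
        using sub_eq_dim[OF _ sW1] dsp fl_dim[OF W, of "Suc ?r"] that by simp
      then show False using e cnd that g1 by auto
    qed
    then show ?case using e by simp
  qed
  have vN: "v \<notin> W (CARD('n) - 1)" using claim[of "CARD('n) - 1 - g"] gn by simp
  have "V' = phi W g v"
  proof
    fix r
    consider "r = 0" | "1 \<le> r \<and> r < g" | "g \<le> r \<and> r \<le> CARD('n)" | "r > CARD('n)" by linarith
    then show "V' r = phi W g v r"
    proof cases
      case 1 then show ?thesis using fl_0[OF W] fl_0[OF V'] g1 unfolding phi_def by simp
    next
      case 2 then show ?thesis using eq unfolding phi_def by auto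
    next
      case 3 then show ?thesis using claim[of "r - g"] unfolding phi_def by auto
    next
      case 4 then show ?thesis using fl_big[OF V'] gn unfolding phi_def by simp
    qed
  qed
  then show ?thesis using g1 gn vN by blast
qed



lemma finite_flags: "finite (flags :: (nat \<Rightarrow> ('a::{field,finite}^'n) set) set)"
proof -
  let ?R = "\<lambda>V::nat \<Rightarrow> ('a^'n) set. restrict V {..CARD('n)}"
  have "inj_on ?R flags"
  proof (rule inj_onI)
    fix U V :: "nat \<Rightarrow> ('a^'n) set"
    assume U: "U \<in> flags" and V: "V \<in> flags" and e: "?R U = ?R V"
    show "U = V"
    proof
      fix k show "U k = V k"
      proof (cases "k \<le> CARD('n)")
        case True then show ?thesis using fun_cong[OF e, of k] by simp
      next
        case False then show ?thesis using fl_big[OF U] fl_big[OF V] by simp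
      qed
    qed
  qed
  moreover have "?R ` flags \<subseteq> (\<Pi>\<^sub>E i \<in> {..CARD('n)}. UNIV)" by auto
  moreover have "finite (\<Pi>\<^sub>E i \<in> {..CARD('n)}. (UNIV :: ('a^'n) set set))"
    by (rule finite_PiE) auto
  ultimately show ?thesis by (meson finite_imageD finite_subset)
qed

lemma okc_arith:
  fixes a :: "nat \<Rightarrow> nat" and l g m :: nat
  assumes mono: "\<And>r s. r \<le> s \<Longrightarrow> s \<le> m \<Longrightarrow> a r \<le> a s"
    and a0: "a 0 = 0" and l: "1 \<le> l" and g: "1 \<le> g" "g \<le> m"
  defines "b \<equiv> \<lambda>r. if r < g then a r else max (a (r - 1)) l"
  shows "(\<forall>r. 1 \<le> r \<and> r < m \<longrightarrow> b r < b (Suc r)) \<longleftrightarrow>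
         (\<forall>r. 1 \<le> r \<and> r < m - 1 \<longrightarrow> a r < a (Suc r)) \<and> a (g - 1) < l \<and> (g < m \<longrightarrow> l < a g)"
proof
  assume H: "\<forall>r. 1 \<le> r \<and> r < m \<longrightarrow> b r < b (Suc r)"
  have 2: "a (g - 1) < l"
  proof (cases "g = 1")
    case True then show ?thesis using a0 l by simp
  next
    case False
    then have "1 \<le> g - 1 \<and> g - 1 < m" using g by arith
    then have "b (g - 1) < b (Suc (g - 1))" using H by blast
    then have "b (g - 1) < b g" using g by simp
    then show ?thesis unfolding b_def using g False by (simp split: if_splits)
  qed
  have 3: "a r > max (a (r - 1)) l" if "g \<le> r" "r < m" for r
  proof -
    have "b r < b (Suc r)" using H that g by auto
    then show ?thesis unfolding b_def using that by (auto split: if_splits)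
  qed
  have 1: "a r < a (Suc r)" if "1 \<le> r" "r < m - 1" for r
  proof (cases "Suc r < g")
    case True
    have "b r < b (Suc r)" using H that by auto
    then show ?thesis unfolding b_def using True by simp
  next
    case False
    then show ?thesis using 3[of "Suc r"] that by auto
  qed
  show "(\<forall>r. 1 \<le> r \<and> r < m - 1 \<longrightarrow> a r < a (Suc r)) \<and> a (g - 1) < l \<and> (g < m \<longrightarrow> l < a g)"
    using 1 2 3[of g] by auto
next
  assume H: "(\<forall>r. 1 \<le> r \<and> r < m - 1 \<longrightarrow> a r < a (Suc r)) \<and> a (g - 1) < l \<and> (g < m \<longrightarrow> l < a g)"
  show "\<forall>r. 1 \<le> r \<and> r < m \<longrightarrow> b r < b (Suc r)"
  proof (intro allI impI)
    fix r assume r: "1 \<le> r \<and> r < m"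
    consider "Suc r < g" | "Suc r = g" | "g \<le> r" by linarith
    then show "b r < b (Suc r)"
    proof cases
      case 1 then show ?thesis unfolding b_def using H r g by auto
    next
      case 2 then show ?thesis unfolding b_def using H r g by auto
    next
      case 3
      have "l < a g" using H 3 r by auto
      then have "l < a r" using mono[of g r] 3 r by auto
      moreover have "a (r - 1) < a r"
      proof (cases "r = g")
        case True then show ?thesis using H \<open>l < a r\<close> by auto
      next
        case False
        then have "1 \<le> r - 1 \<and> r - 1 < m - 1" using r 3 g by arith
        then have "a (r - 1) < a (Suc (r - 1))" using H by blast
        then show ?thesis using r by simp
      qed
      ultimately show ?thesis unfolding b_def using 3 by auto
    qed
  qed
qed

context
  fixes V :: "nat \<Rightarrow> ('a::field^'n) set"
  assumes V: "V \<in> flags"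
begin

lemma jdx_span_insert:
  assumes "vec.subspace S"
  shows "jdx V (vec.span (insert v S)) = max (jdx V S) (jdx V {v})"
proof (rule antisym)
  let ?M = "max (jdx V S) (jdx V {v})"
  have M: "?M \<le> CARD('n)" using jdx_le_n[OF V] by simp
  have "S \<subseteq> V ?M" using jdx_iff[OF V M] by simp
  moreover have "v \<in> V ?M" using jdx_iff[OF V M, of "{v}"] by simp
  ultimately have "vec.span (insert v S) \<subseteq> V ?M"
    using fl_subspace[OF V M] span_insert_subset by blast
  then show "jdx V (vec.span (insert v S)) \<le> ?M" by (rule jdx_le[OF V])
next
  let ?j = "jdx V (vec.span (insert v S))"
  have sp: "vec.span (insert v S) \<subseteq> V ?j" by (rule jdx_sub[OF V])
  have "S \<subseteq> V ?j" using sp vec.span_superset[of "insert v S"] by blast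
  moreover have "{v} \<subseteq> V ?j" using sp vec.span_superset[of "insert v S"] by blast
  ultimately show "max (jdx V S) (jdx V {v}) \<le> ?j" using jdx_le[OF V] by (simp add: max_def)
qed

lemma jdx_mono_flag:
  assumes W: "W \<in> flags" and "r \<le> s" "s \<le> CARD('n)"
  shows "jdx V (W r) \<le> jdx V (W s)"
proof -
  have "W r \<subseteq> W s" using fl_mono[OF W] assms by simp
  also have "\<dots> \<subseteq> V (jdx V (W s))" by (rule jdx_sub[OF V])
  finally show ?thesis by (rule jdx_le[OF V])
qed

lemma jdx_W0:
  assumes W: "W \<in> flags" shows "jdx V (W 0) = 0"
  using jdx_le[OF V, of "W 0" 0] fl_0[OF W] fl_0[OF V] by simp

end



lemma card_UNIV_vec: "card (UNIV :: ('a::{field,finite}^'n) set) = CARD('a) ^ CARD('n)"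
  using card_subspace[OF vec.subspace_UNIV] vec_dim_card by metis

lemma card_diff_sub:
  fixes S T :: "('a::{field,finite}^'n) set"
  assumes "vec.subspace S" "vec.subspace T" "S \<subseteq> T"
  shows "card (T - S) = CARD('a) ^ vec.dim T - CARD('a) ^ vec.dim S"
  using card_Diff_subset[of S T] assms card_subspace by (metis finite)

context
  fixes W V :: "nat \<Rightarrow> ('a::{field,finite}^'n) set"
  assumes W: "W \<in> flags" and V: "V \<in> flags"
begin

lemma card_phi_image:
  assumes g: "1 \<le> g" "g < CARD('n)"
    and A: "A \<subseteq> {v. v \<notin> W (CARD('n) - 1)}"
    and cl: "\<And>u v. v \<in> A \<Longrightarrow> u \<notin> W (CARD('n) - 1) \<Longrightarrow> phi W g u = phi W g v \<Longrightarrow> u \<in> A"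
  shows "card A = card (phi W g ` A) * (CARD('a) ^ g - CARD('a) ^ (g - 1))"
proof -
  have "card A = (\<Sum>x\<in>A. 1)" by simp
  also have "\<dots> = (\<Sum>y\<in>phi W g ` A. \<Sum>x\<in>{x. x \<in> A \<and> phi W g x = y}. 1)"
    by (rule sum.image_gen) simp
  also have "\<dots> = (\<Sum>y\<in>phi W g ` A. CARD('a) ^ g - CARD('a) ^ (g - 1))"
  proof (rule sum.cong[OF refl])
    fix y assume "y \<in> phi W g ` A"
    then obtain v where v: "v \<in> A" and y: "y = phi W g v" by blast
    have vn: "v \<notin> W (CARD('n) - 1)" using A v by auto
    have "{x. x \<in> A \<and> phi W g x = y} = {u. u \<notin> W (CARD('n) - 1) \<and> phi W g u = phi W g v}"
      using A cl v y by auto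
    also have "\<dots> = vec.span (insert v (W (g - 1))) - W (g - 1)"
      by (rule phi_fiber[OF W g vn])
    finally have e: "{x. x \<in> A \<and> phi W g x = y} = vec.span (insert v (W (g - 1))) - W (g - 1)" .
    have sS: "vec.subspace (W (g - 1))" using fl_subspace[OF W] g by simp
    have "W (g - 1) \<subseteq> W (CARD('n) - 1)" using fl_mono[OF W, of "g - 1" "CARD('n) - 1"] g by simp
    then have vS: "v \<notin> W (g - 1)" using vn by blast
    have dS: "vec.dim (W (g - 1)) = g - 1" using fl_dim[OF W] g by simp
    have dT: "vec.dim (vec.span (insert v (W (g - 1)))) = g"
      using dim_span_insert[OF sS vS] dS g by simp
    have "card (vec.span (insert v (W (g - 1))) - W (g - 1)) = CARD('a) ^ g - CARD('a) ^ (g - 1)"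
      using card_diff_sub[OF sS vec.subspace_span, of "insert v (W (g - 1))"] vec.span_superset[of "insert v (W (g - 1))"] dS dT
      by auto
    then show "(\<Sum>x\<in>{x. x \<in> A \<and> phi W g x = y}. 1) = CARD('a) ^ g - CARD('a) ^ (g - 1)"
      using e by simp
  qed
  also have "\<dots> = card (phi W g ` A) * (CARD('a) ^ g - CARD('a) ^ (g - 1))" by simp
  finally show ?thesis .
qed

lemma card_notin_Wn1: "card {v. v \<notin> W (CARD('n) - 1)} = CARD('a) ^ CARD('n) - CARD('a) ^ (CARD('n) - 1)"
proof -
  have "{v. v \<notin> W (CARD('n) - 1)} = UNIV - W (CARD('n) - 1)" by auto
  moreover have "vec.subspace (W (CARD('n) - 1))" "vec.dim (W (CARD('n) - 1)) = CARD('n) - 1"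
    using fl_subspace[OF W] fl_dim[OF W] by auto
  moreover have "card (UNIV - W (CARD('n) - 1)) = card (UNIV :: ('a^'n) set) - card (W (CARD('n) - 1))"
    by (rule card_Diff_subset) auto
  moreover have "card (W (CARD('n) - 1)) = CARD('a) ^ (CARD('n) - 1)"
    using card_subspace[of "W (CARD('n) - 1)"] fl_subspace[OF W] fl_dim[OF W] by simp
  ultimately show ?thesis using card_UNIV_vec by simp
qed

lemma dim_int:
  assumes i: "i \<le> CARD('n)" and nsub: "\<not> V i \<subseteq> W (CARD('n) - 1)"
  shows "vec.dim (V i \<inter> W (CARD('n) - 1)) = i - 1"
proof -
  let ?H = "W (CARD('n) - 1)"
  have sV: "vec.subspace (V i)" and dV: "vec.dim (V i) = i" using fl_subspace[OF V i] fl_dim[OF V i] by auto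
  have sH: "vec.subspace ?H" and dH: "vec.dim ?H = CARD('n) - 1" using fl_subspace[OF W] fl_dim[OF W] by auto
  have sI: "vec.subspace (V i \<inter> ?H)" using sV sH by (rule vec.subspace_inter)
  have "vec.dim {x + y |x y. x \<in> V i \<and> y \<in> ?H} + vec.dim (V i \<inter> ?H) = vec.dim (V i) + vec.dim ?H"
    by (rule vec.dim_sums_Int[OF sV sH])
  moreover have "vec.dim {x + y |x y. x \<in> V i \<and> y \<in> ?H} \<le> vec.dim (UNIV :: ('a^'n) set)"
    by (rule vec.dim_subset) simp
  moreover have "vec.dim (UNIV :: ('a^'n) set) = CARD('n)" by (rule vec_dim_card)
  ultimately have ge: "vec.dim (V i \<inter> ?H) \<ge> i - 1" using dV dH by linarith
  have le: "vec.dim (V i \<inter> ?H) \<le> i" using vec.dim_subset[of "V i \<inter> ?H" "V i"] dV by auto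
  have "vec.dim (V i \<inter> ?H) \<noteq> i"
  proof
    assume "vec.dim (V i \<inter> ?H) = i"
    then have "V i \<inter> ?H = V i" using sub_eq_dim[OF sI sV] dV by auto
    then show False using nsub by auto
  qed
  then show ?thesis using ge le by linarith
qed

lemma card_Fi:
  assumes i: "i \<le> CARD('n)"
  shows "card {v. v \<in> V i \<and> v \<notin> W (CARD('n) - 1)}
         = (if V i \<subseteq> W (CARD('n) - 1) then 0 else CARD('a) ^ i - CARD('a) ^ (i - 1))"
proof (cases "V i \<subseteq> W (CARD('n) - 1)")
  case True
  then show ?thesis by auto
next
  case False
  let ?H = "W (CARD('n) - 1)"
  have sV: "vec.subspace (V i)" and dV: "vec.dim (V i) = i" using fl_subspace[OF V i] fl_dim[OF V i] by auto
  have sH: "vec.subspace ?H" using fl_subspace[OF W] by auto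
  have sI: "vec.subspace (V i \<inter> ?H)" using sV sH by (rule vec.subspace_inter)
  have "{v. v \<in> V i \<and> v \<notin> ?H} = V i - (V i \<inter> ?H)" by auto
  then have "card {v. v \<in> V i \<and> v \<notin> ?H} = CARD('a) ^ i - CARD('a) ^ (i - 1)"
    using card_diff_sub[OF sI sV] dim_int[OF i False] dV by auto
  then show ?thesis using False by simp
qed

lemma key_P:
  assumes g: "1 \<le> g" "g < CARD('n)" and P: "\<not> V (jdx V (W g)) \<subseteq> W (CARD('n) - 1)"
  shows "\<not> V (jdx V (W g) - 1) \<subseteq> W (CARD('n) - 1)"
proof
  let ?H = "W (CARD('n) - 1)" and ?a = "jdx V (W g)"
  assume sub: "V (?a - 1) \<subseteq> ?H"
  have a1: "1 \<le> ?a" using jdx_pos[OF V] flag_not0[OF W g(1)] g by simp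
  have an: "?a \<le> CARD('n)" by (rule jdx_le_n[OF V])
  have dI: "vec.dim (V ?a \<inter> ?H) = ?a - 1" using dim_int[OF an P] .
  have sV: "vec.subspace (V ?a)" using fl_subspace[OF V an] .
  have sH: "vec.subspace ?H" using fl_subspace[OF W] by auto
  have sI: "vec.subspace (V ?a \<inter> ?H)" using sV sH by (rule vec.subspace_inter)
  have s1: "vec.subspace (V (?a - 1))" using fl_subspace[OF V] an by simp
  have "V (?a - 1) \<subseteq> V ?a" using fl_mono[OF V] an by simp
  then have "V (?a - 1) \<subseteq> V ?a \<inter> ?H" using sub by auto
  then have eq: "V (?a - 1) = V ?a \<inter> ?H"
    using sub_eq_dim[OF s1 sI] dI fl_dim[OF V, of "?a - 1"] an by simp
  have "W g \<subseteq> ?H" using fl_mono[OF W, of g "CARD('n) - 1"] g by simp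
  moreover have "W g \<subseteq> V ?a" by (rule jdx_sub[OF V])
  ultimately have "W g \<subseteq> V (?a - 1)" using eq by auto
  then have "?a \<le> ?a - 1" by (rule jdx_le[OF V])
  then show False using a1 by simp
qed

end


definition Ag :: "(nat \<Rightarrow> ('a::field^'n) set) \<Rightarrow> (nat \<Rightarrow> ('a^'n) set) \<Rightarrow> nat \<Rightarrow> nat \<Rightarrow> ('a^'n) set" where
  "Ag W V t g = {v. v \<notin> W (CARD('n) - 1) \<and> (phi W g v, V) \<in> hX t}"

context
  fixes W V :: "nat \<Rightarrow> ('a::{field,finite}^'n) set" and t :: nat
  assumes W: "W \<in> flags" and V: "V \<in> flags" and t1: "1 \<le> t" and tn: "t \<le> CARD('n) - 1"
begin

lemma A_big:
  assumes g: "CARD('n) - t < g" "g < CARD('n)"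
  shows "Ag W V t g = (if okc V W (CARD('n) - t) then {v. v \<notin> W (CARD('n) - 1)} else {})"
proof -
  have "(phi W g v, V) \<in> hX t \<longleftrightarrow> okc V W (CARD('n) - t)" if v: "v \<notin> W (CARD('n) - 1)" for v
  proof -
    have g1: "1 \<le> g" using g by simp
    have "(phi W g v, V) \<in> hX t \<longleftrightarrow> okc V (phi W g v) (CARD('n) - t)"
      using hX_iff[OF phi_flag[OF W g1 g(2) v] V] tn by simp
    also have "\<dots> \<longleftrightarrow> okc V W (CARD('n) - t)"
      unfolding okc_def phi_def using g by (intro iff_allI) auto
    finally show ?thesis .
  qed
  then show ?thesis unfolding Ag_def by auto
qed

lemma A_small:
  assumes g: "1 \<le> g" "g \<le> CARD('n) - t"
  shows "Ag W V t g = (if okc V W (CARD('n) - t - 1)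
      then {v. v \<notin> W (CARD('n) - 1) \<and> v \<notin> V (jdx V (W (g - 1)))
               \<and> v \<in> V (if g < CARD('n) - t then jdx V (W g) - 1 else CARD('n))} else {})"
proof -
  let ?m = "CARD('n) - t"
  let ?a = "\<lambda>r. jdx V (W r)"
  have gn: "g < CARD('n)" using g t1 tn by linarith
  have "(phi W g v, V) \<in> hX t \<longleftrightarrow> okc V W (?m - 1) \<and> v \<notin> V (?a (g - 1))
               \<and> v \<in> V (if g < ?m then ?a g - 1 else CARD('n))"
    if v: "v \<notin> W (CARD('n) - 1)" for v
  proof -
    let ?l = "jdx V {v}"
    have v0: "v \<noteq> 0" using v vec.subspace_0[OF fl_subspace[OF W, of "CARD('n) - 1"]] by auto
    have l1: "1 \<le> ?l" using jdx_pos[OF V, of "{v}"] v0 by auto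
    define b where "b = (\<lambda>r. if r < g then ?a r else max (?a (r - 1)) ?l)"
    have jb: "jdx V (phi W g v r) = b r" if "r \<le> CARD('n)" for r
    proof (cases "r < g")
      case True then show ?thesis unfolding b_def phi_def by simp
    next
      case False
      then have "jdx V (phi W g v r) = jdx V (vec.span (insert v (W (r - 1))))"
        using that unfolding phi_def by simp
      also have "\<dots> = max (?a (r - 1)) ?l"
        using jdx_span_insert[OF V fl_subspace[OF W, of "r - 1"]] that by simp
      finally show ?thesis unfolding b_def using False by simp
    qed
    have "(phi W g v, V) \<in> hX t \<longleftrightarrow> okc V (phi W g v) ?m"
      using hX_iff[OF phi_flag[OF W g(1) gn v] V] tn by simp
    also have "\<dots> \<longleftrightarrow> (\<forall>r. 1 \<le> r \<and> r < ?m \<longrightarrow> b r < b (Suc r))"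
      unfolding okc_def using jb by (intro iff_allI) auto
    also have "\<dots> \<longleftrightarrow> (\<forall>r. 1 \<le> r \<and> r < ?m - 1 \<longrightarrow> ?a r < ?a (Suc r)) \<and> ?a (g - 1) < ?l \<and> (g < ?m \<longrightarrow> ?l < ?a g)"
    proof -
      have mono: "\<And>r s. r \<le> s \<Longrightarrow> s \<le> ?m \<Longrightarrow> ?a r \<le> ?a s"
        using jdx_mono_flag[OF V W] by auto
      show ?thesis unfolding b_def
        using okc_arith[where a="\<lambda>r. jdx V (W r)" and l="jdx V {v}" and g=g and m="CARD('n) - t",
            OF mono jdx_W0[OF V W] l1 g] by simp
    qed
    also have "\<dots> \<longleftrightarrow> okc V W (?m - 1) \<and> v \<notin> V (?a (g - 1))
               \<and> v \<in> V (if g < ?m then ?a g - 1 else CARD('n))"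
    proof -
      have e1: "?a (g - 1) < ?l \<longleftrightarrow> v \<notin> V (?a (g - 1))"
      proof -
        have "{v} \<subseteq> V (?a (g - 1)) \<longleftrightarrow> ?l \<le> ?a (g - 1)"
          by (rule jdx_iff[OF V jdx_le_n[OF V]])
        then show ?thesis by auto
      qed
      have e2: "?l < ?a g \<longleftrightarrow> v \<in> V (?a g - 1)" if "g < ?m"
      proof -
        have "1 \<le> ?a g" using jdx_pos[OF V] flag_not0[OF W g(1)] gn by simp
        moreover have "?a g - 1 \<le> CARD('n)" using jdx_le_n[OF V, of "W g"] by simp
        ultimately show ?thesis using jdx_iff[OF V, of "?a g - 1" "{v}"] by auto
      qed
      have e3: "v \<in> V (CARD('n))" using fl_n[OF V] by simp
      show ?thesis unfolding okc_def using e1 e2 e3 by auto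
    qed
    finally show ?thesis .
  qed
  then show ?thesis unfolding Ag_def by auto
qed

end


lemma telesc_aux:
  fixes G :: "nat \<Rightarrow> complex" and a :: "nat \<Rightarrow> nat" and Q :: complex
  shows "(\<Sum>g\<in>{1..<Suc k}. G (a g) / Q ^ Suc g - G (a (g - 1)) / Q ^ g) = G (a k) / Q ^ Suc k - G (a 0) / Q"
proof (induction k)
  case 0 then show ?case by simp
next
  case (Suc k)
  have "(\<Sum>g\<in>{1..<Suc (Suc k)}. G (a g) / Q ^ Suc g - G (a (g - 1)) / Q ^ g)
      = (\<Sum>g\<in>{1..<Suc k}. G (a g) / Q ^ Suc g - G (a (g - 1)) / Q ^ g)
        + (G (a (Suc k)) / Q ^ Suc (Suc k) - G (a k) / Q ^ Suc k)" by simp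
  then show ?case using Suc.IH by simp
qed

lemma telesc:
  fixes G :: "nat \<Rightarrow> complex" and a :: "nat \<Rightarrow> nat" and Q :: complex
  assumes Q: "Q \<noteq> 0" and m: "1 \<le> m"
    and step: "\<And>g. 1 \<le> g \<Longrightarrow> g < m \<Longrightarrow> G (a g - 1) = G (a g) / Q"
    and a0: "G (a 0) = 0"
  shows "(\<Sum>g\<in>{1..m}. (G (if g < m then a g - 1 else N) - G (a (g - 1))) / Q ^ g) = G N / Q ^ m"
proof -
  obtain k where k: "m = Suc k" using m by (cases m) auto
  have "{1..m} = insert m {1..<m}" using m by auto
  then have "(\<Sum>g\<in>{1..m}. (G (if g < m then a g - 1 else N) - G (a (g - 1))) / Q ^ g)
      = (G N - G (a (m - 1))) / Q ^ m + (\<Sum>g\<in>{1..<m}. (G (if g < m then a g - 1 else N) - G (a (g - 1))) / Q ^ g)"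
    by simp
  also have "(\<Sum>g\<in>{1..<m}. (G (if g < m then a g - 1 else N) - G (a (g - 1))) / Q ^ g)
      = (\<Sum>g\<in>{1..<m}. G (a g) / Q ^ Suc g - G (a (g - 1)) / Q ^ g)"
  proof (rule sum.cong[OF refl])
    fix g assume g: "g \<in> {1..<m}"
    then have "G (if g < m then a g - 1 else N) = G (a g) / Q" using step by auto
    then show "(G (if g < m then a g - 1 else N) - G (a (g - 1))) / Q ^ g = G (a g) / Q ^ Suc g - G (a (g - 1)) / Q ^ g"
      using Q by (simp add: field_simps)
  qed
  also have "\<dots> = G (a k) / Q ^ Suc k - G (a 0) / Q" unfolding k by (rule telesc_aux)
  finally show ?thesis using a0 k by (simp add: diff_divide_distrib)
qed

lemma reindex_pow:
  fixes Q :: complex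
  assumes "m \<le> n"
  shows "(\<Sum>g\<in>{Suc m..<n}. Q ^ (n - g)) = (\<Sum>i\<in>{1..<n - m}. Q ^ i)"
  by (rule sum.reindex_bij_witness[where i="\<lambda>i. n - i" and j="\<lambda>g. n - g"]) (use assms in auto)

lemma card_field_ge2: "2 \<le> CARD('a::{field,finite})"
proof -
  have "card {0::'a, 1} \<le> CARD('a)" by (rule card_mono) auto
  then show ?thesis by simp
qed



context
  fixes W V :: "nat \<Rightarrow> ('a::{field,finite}^'n) set" and t :: nat
  assumes W: "W \<in> flags" and V: "V \<in> flags" and t1: "1 \<le> t" and tn: "t \<le> CARD('n) - 1"
begin

lemma Q_facts: "(of_nat CARD('a) :: complex) \<noteq> 0" "(of_nat CARD('a) :: complex) \<noteq> 1"
  using card_field_ge2[where 'a='a] by auto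

lemma img_eq:
  assumes g: "1 \<le> g" "g < CARD('n)"
  shows "(of_nat (card (phi W g ` Ag W V t g)) :: complex)
       = of_nat (card (Ag W V t g)) / ((of_nat CARD('a)) ^ g - (of_nat CARD('a)) ^ (g - 1))"
proof -
  let ?Q = "(of_nat CARD('a) :: complex)"
  have c: "card (Ag W V t g) = card (phi W g ` Ag W V t g) * (CARD('a) ^ g - CARD('a) ^ (g - 1))"
    by (rule card_phi_image[OF W V g]) (auto simp: Ag_def)
  have le: "CARD('a) ^ (g - 1) \<le> CARD('a) ^ g" using card_field_ge2[where 'a='a]
    by (intro power_increasing) auto
  have "?Q ^ g - ?Q ^ (g - 1) = ?Q ^ (g - 1) * (?Q - 1)"
    using g by (cases g) (auto simp: algebra_simps)
  then have nz: "?Q ^ g - ?Q ^ (g - 1) \<noteq> 0" using Q_facts by simp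
  have "(of_nat (card (Ag W V t g)) :: complex) = of_nat (card (phi W g ` Ag W V t g)) * (?Q ^ g - ?Q ^ (g - 1))"
    using c le by (simp add: of_nat_diff)
  then show ?thesis using nz by (simp add: field_simps)
qed

lemma img_big:
  assumes g: "CARD('n) - t < g" "g < CARD('n)"
  shows "(of_nat (card (phi W g ` Ag W V t g)) :: complex)
       = (if okc V W (CARD('n) - t) then (of_nat CARD('a)) ^ (CARD('n) - g) else 0)"
proof -
  let ?Q = "(of_nat CARD('a) :: complex)"
  have g1: "1 \<le> g" using g by simp
  have le: "CARD('a) ^ (CARD('n) - 1) \<le> CARD('a) ^ CARD('n)" using card_field_ge2[where 'a='a]
    by (intro power_increasing) auto
  have e: "?Q ^ CARD('n) - ?Q ^ (CARD('n) - 1) = ?Q ^ (CARD('n) - g) * (?Q ^ g - ?Q ^ (g - 1))"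
  proof -
    have "CARD('n) = (CARD('n) - g) + g" "CARD('n) - 1 = (CARD('n) - g) + (g - 1)" using g by auto
    then show ?thesis by (metis power_add right_diff_distrib)
  qed
  have "?Q ^ g - ?Q ^ (g - 1) = ?Q ^ (g - 1) * (?Q - 1)"
    using g1 by (cases g) (auto simp: algebra_simps)
  then have nz: "?Q ^ g - ?Q ^ (g - 1) \<noteq> 0" using Q_facts by simp
  show ?thesis
  proof (cases "okc V W (CARD('n) - t)")
    case True
    then have "(of_nat (card (Ag W V t g)) :: complex) = ?Q ^ CARD('n) - ?Q ^ (CARD('n) - 1)"
      using A_big[OF W V t1 tn g] card_notin_Wn1[OF W V] le by (simp add: of_nat_diff)
    then show ?thesis using img_eq[OF g1 g(2)] True e nz by simp
  next
    case False
    then show ?thesis using img_eq[OF g1 g(2)] A_big[OF W V t1 tn g] by simp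
  qed
qed

definition Gf :: "nat \<Rightarrow> complex" where
  "Gf i = (if V i \<subseteq> W (CARD('n) - 1) then 0 else (of_nat CARD('a)) ^ i)"

lemma Fc_val:
  assumes i: "i \<le> CARD('n)"
  shows "(of_nat (card {v. v \<in> V i \<and> v \<notin> W (CARD('n) - 1)}) :: complex)
       = Gf i * ((of_nat CARD('a)) - 1) / (of_nat CARD('a))"
proof (cases "V i \<subseteq> W (CARD('n) - 1)")
  case True
  then show ?thesis using card_Fi[OF W V i] unfolding Gf_def by simp
next
  case False
  let ?Q = "(of_nat CARD('a) :: complex)"
  have i1: "1 \<le> i"
  proof (rule ccontr)
    assume "\<not> 1 \<le> i"
    then have "i = 0" by simp
    then show False using False fl_0[OF V] vec.subspace_0[OF fl_subspace[OF W, of "CARD('n) - 1"]] by auto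
  qed
  have le: "CARD('a) ^ (i - 1) \<le> CARD('a) ^ i" using card_field_ge2[where 'a='a]
    by (intro power_increasing) auto
  have "(of_nat (card {v. v \<in> V i \<and> v \<notin> W (CARD('n) - 1)}) :: complex) = ?Q ^ i - ?Q ^ (i - 1)"
    using card_Fi[OF W V i] False le by (simp add: of_nat_diff)
  also have "\<dots> = ?Q ^ i * (?Q - 1) / ?Q"
    using i1 Q_facts by (cases i) (auto simp: field_simps)
  finally show ?thesis unfolding Gf_def using False by simp
qed

lemma img_small:
  assumes g: "1 \<le> g" "g \<le> CARD('n) - t"
  shows "(of_nat (card (phi W g ` Ag W V t g)) :: complex)
       = (if okc V W (CARD('n) - t - 1)
          then (Gf (if g < CARD('n) - t then jdx V (W g) - 1 else CARD('n)) - Gf (jdx V (W (g - 1))))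
               / (of_nat CARD('a)) ^ g
          else 0)"
proof -
  let ?Q = "(of_nat CARD('a) :: complex)"
  let ?m = "CARD('n) - t"
  let ?H = "W (CARD('n) - 1)"
  let ?x = "jdx V (W (g - 1))" and ?y = "if g < ?m then jdx V (W g) - 1 else CARD('n)"
  have gn: "g < CARD('n)" using g t1 tn by linarith
  have nzQ: "?Q ^ g - ?Q ^ (g - 1) = ?Q ^ g * (?Q - 1) / ?Q"
    using g Q_facts by (cases g) (auto simp: field_simps)
  show ?thesis
  proof (cases "okc V W (?m - 1)")
    case False
    then show ?thesis using img_eq[OF g(1) gn] A_small[OF W V t1 tn g] by simp
  next
    case True
    have yn: "?y \<le> CARD('n)" using jdx_le_n[OF V, of "W g"] by auto
    have xy: "?x \<le> ?y"
    proof (cases "g < ?m")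
      case True
      have "?x < jdx V (W g)"
      proof (cases "g = 1")
        case True
        have "1 \<le> jdx V (W g)" using jdx_pos[OF V] flag_not0[OF W g(1)] gn by simp
        then show ?thesis using True jdx_W0[OF V W] by simp
      next
        case False
        then have "1 \<le> g - 1 \<and> g - 1 < ?m - 1" using g \<open>g < ?m\<close> by arith
        then have "jdx V (W (g - 1)) < jdx V (W (Suc (g - 1)))"
          using \<open>okc V W (?m - 1)\<close> unfolding okc_def by blast
        then show ?thesis using g by simp
      qed
      then show ?thesis using True by simp
    next
      case False
      then show ?thesis using jdx_le_n[OF V] by simp
    qed
    have xn: "?x \<le> CARD('n)" using jdx_le_n[OF V] by simp
    have set: "Ag W V t g = {v. v \<in> V ?y \<and> v \<notin> ?H} - {v. v \<in> V ?x \<and> v \<notin> ?H}"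
      using A_small[OF W V t1 tn g] True by auto
    have sub: "{v. v \<in> V ?x \<and> v \<notin> ?H} \<subseteq> {v. v \<in> V ?y \<and> v \<notin> ?H}"
    proof -
      have "V ?x \<subseteq> V ?y" by (rule fl_mono[OF V xy yn])
      then show ?thesis by blast
    qed
    have "card (Ag W V t g) = card {v. v \<in> V ?y \<and> v \<notin> ?H} - card {v. v \<in> V ?x \<and> v \<notin> ?H}"
      unfolding set by (rule card_Diff_subset[OF _ sub]) simp
    moreover have "card {v. v \<in> V ?x \<and> v \<notin> ?H} \<le> card {v. v \<in> V ?y \<and> v \<notin> ?H}"
      by (rule card_mono[OF _ sub]) simp
    ultimately have "(of_nat (card (Ag W V t g)) :: complex)
        = of_nat (card {v. v \<in> V ?y \<and> v \<notin> ?H}) - of_nat (card {v. v \<in> V ?x \<and> v \<notin> ?H})"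
      by (simp add: of_nat_diff)
    also have "\<dots> = (Gf ?y - Gf ?x) * (?Q - 1) / ?Q"
      using Fc_val[OF yn] Fc_val[OF xn] by (simp add: field_simps)
    finally have cA: "(of_nat (card (Ag W V t g)) :: complex) = (Gf ?y - Gf ?x) * (?Q - 1) / ?Q" .
    have "(of_nat (card (phi W g ` Ag W V t g)) :: complex) = (Gf ?y - Gf ?x) * (?Q - 1) / ?Q / (?Q ^ g * (?Q - 1) / ?Q)"
      using img_eq[OF g(1) gn] cA nzQ by simp
    also have "\<dots> = (Gf ?y - Gf ?x) / ?Q ^ g"
      using Q_facts by (simp add: field_simps)
    finally show ?thesis using True by simp
  qed
qed

end


theorem lemma3:
  fixes W V :: "nat \<Rightarrow> ('a::{field,finite} ^ 'n) set"
    and t :: nat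
  assumes "CARD('n) \<ge> 2"
    and "1 \<le> t" and "t \<le> CARD('n) - 1"
    and "W \<in> flags" and "V \<in> flags"
  shows "hconv hf1 (hft t) W V
         = (\<Sum>i<t. (of_nat CARD('a) :: complex) ^ i) * hft t W V
           + (of_nat CARD('a) :: complex) ^ t * hft (t + 1) W V"
proof -
  note n2 = assms(1) and t1 = assms(2) and tn = assms(3) and W = assms(4) and V = assms(5)
  let ?n = "CARD('n)"
  let ?m = "CARD('n) - t"
  let ?Q = "(of_nat CARD('a) :: complex)"
  let ?H = "W (CARD('n) - 1)"
  let ?ok1 = "okc V W ?m" and ?ok0 = "okc V W (?m - 1)"
  let ?a = "\<lambda>r. jdx V (W r)"
  have m1: "1 \<le> ?m" and mn: "?m < ?n" using t1 tn by auto
  have hft1: "hft t W V = (if ?ok1 then 1 else 0)"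
    unfolding hft_def using hX_iff[OF W V, of t] tn by simp
  have hft0: "hft (t + 1) W V = (if ?ok0 then 1 else 0)"
  proof -
    have "CARD('n) - (t + 1) = ?m - 1" by simp
    then show ?thesis unfolding hft_def using hX_iff[OF W V, of "t + 1"] tn t1 by simp
  qed
  define M where "M = {V' \<in> flags. hf1 W V' = 1 \<and> (V', V) \<in> hX t}"
  have S1: "hconv hf1 (hft t) W V = of_nat (card M)"
  proof -
    have "hconv hf1 (hft t) W V = (\<Sum>V'\<in>flags. if hf1 W V' = 1 \<and> (V', V) \<in> hX t then 1 else 0)"
      unfolding hconv_def
      by (rule sum.cong[OF refl]) (auto simp: hf1_def hft_def)
    also have "\<dots> = (\<Sum>V'\<in>M. (1::complex))"
      unfolding M_def by (rule sum.inter_filter[OF finite_flags, symmetric])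
    finally show ?thesis by simp
  qed
  define Mw where "Mw = (if ?ok1 then {W} else {})"
  have S2: "M = Mw \<union> (\<Union>g\<in>{1..<?n}. phi W g ` Ag W V t g)"
  proof
    show "M \<subseteq> Mw \<union> (\<Union>g\<in>{1..<?n}. phi W g ` Ag W V t g)"
    proof
      fix V' assume "V' \<in> M"
      then have V': "V' \<in> flags" "hf1 W V' = 1" "(V', V) \<in> hX t" unfolding M_def by auto
      show "V' \<in> Mw \<union> (\<Union>g\<in>{1..<?n}. phi W g ` Ag W V t g)"
      proof (cases "V' = W")
        case True
        then have "?ok1" using V'(3) hX_iff[OF W V, of t] tn by simp
        then show ?thesis using True unfolding Mw_def by simp
      next
        case False
        then obtain g v where gv: "1 \<le> g" "g < ?n" "v \<notin> ?H" "V' = phi W g v"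
          using hf1_cases[OF W V'(1,2)] by blast
        then have "v \<in> Ag W V t g" using V'(3) unfolding Ag_def by simp
        then show ?thesis using gv by auto
      qed
    qed
  next
    show "Mw \<union> (\<Union>g\<in>{1..<?n}. phi W g ` Ag W V t g) \<subseteq> M"
    proof
      fix V' assume "V' \<in> Mw \<union> (\<Union>g\<in>{1..<?n}. phi W g ` Ag W V t g)"
      then consider "V' \<in> Mw" | g v where "1 \<le> g" "g < ?n" "v \<in> Ag W V t g" "V' = phi W g v" by auto
      then show "V' \<in> M"
      proof cases
        case 1
        then have "V' = W" "?ok1" unfolding Mw_def by (auto split: if_splits)
        then show ?thesis unfolding M_def using W hf1_W[OF W] hX_iff[OF W V, of t] tn by simp
      next
        case 2
        then have v: "v \<notin> ?H" "(phi W g v, V) \<in> hX t" unfolding Ag_def by auto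
        show ?thesis unfolding M_def using phi_flag[OF W 2(1,2) v(1)] phi_hf1[OF W 2(1,2) v(1)] v(2) 2(4) by simp
      qed
    qed
  qed
  have S3: "card M = card Mw + (\<Sum>g\<in>{1..<?n}. card (phi W g ` Ag W V t g))"
  proof -
    have disj1: "Mw \<inter> (\<Union>g\<in>{1..<?n}. phi W g ` Ag W V t g) = {}"
    proof -
      have nW: "W \<notin> phi W g ` Ag W V t g" if "g \<in> {1..<?n}" for g
      proof
        assume "W \<in> phi W g ` Ag W V t g"
        then obtain v where v: "v \<in> Ag W V t g" "W = phi W g v" by blast
        then have "v \<notin> ?H" unfolding Ag_def by simp
        then show False using phi_neq_W[OF W _ _ \<open>v \<notin> ?H\<close>, of g] that v(2) by auto
      qed
      have "W \<notin> (\<Union>g\<in>{1..<?n}. phi W g ` Ag W V t g)" using nW by blast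
      then show ?thesis unfolding Mw_def by simp
    qed
    have disj2: "\<forall>g\<in>{1..<?n}. \<forall>g'\<in>{1..<?n}. g \<noteq> g' \<longrightarrow> phi W g ` Ag W V t g \<inter> phi W g' ` Ag W V t g' = {}"
    proof (intro ballI impI)
      fix g g' assume g: "g \<in> {1..<?n}" and g': "g' \<in> {1..<?n}" and ne: "g \<noteq> g'"
      show "phi W g ` Ag W V t g \<inter> phi W g' ` Ag W V t g' = {}"
      proof (rule ccontr)
        assume "phi W g ` Ag W V t g \<inter> phi W g' ` Ag W V t g' \<noteq> {}"
        then obtain v v' where v: "v \<in> Ag W V t g" "v' \<in> Ag W V t g'" "phi W g v = phi W g' v'" by blast
        then have "v \<notin> ?H" "v' \<notin> ?H" unfolding Ag_def by auto
        then have "g = g'" using phi_inj_g[OF W _ _ _ _ _ _ v(3)] g g' by auto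
        then show False using ne by simp
      qed
    qed
    have "card M = card Mw + card (\<Union>g\<in>{1..<?n}. phi W g ` Ag W V t g)"
      unfolding S2 by (rule card_Un_disjoint[OF _ _ disj1]) (auto simp: Mw_def)
    also have "card (\<Union>g\<in>{1..<?n}. phi W g ` Ag W V t g) = (\<Sum>g\<in>{1..<?n}. card (phi W g ` Ag W V t g))"
      by (rule card_UN_disjoint) (use disj2 in auto)
    finally show ?thesis .
  qed
  have split: "{1..<?n} = {1..?m} \<union> {Suc ?m..<?n}" using mn by auto
  have sum_split: "(\<Sum>g\<in>{1..<?n}. (of_nat (card (phi W g ` Ag W V t g)) :: complex))
      = (\<Sum>g\<in>{1..?m}. of_nat (card (phi W g ` Ag W V t g))) + (\<Sum>g\<in>{Suc ?m..<?n}. of_nat (card (phi W g ` Ag W V t g)))"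
    unfolding split by (rule sum.union_disjoint) auto
  have big: "(\<Sum>g\<in>{Suc ?m..<?n}. (of_nat (card (phi W g ` Ag W V t g)) :: complex))
      = (if ?ok1 then (\<Sum>i\<in>{1..<t}. ?Q ^ i) else 0)"
  proof -
    have "(\<Sum>g\<in>{Suc ?m..<?n}. (of_nat (card (phi W g ` Ag W V t g)) :: complex))
        = (\<Sum>g\<in>{Suc ?m..<?n}. if ?ok1 then ?Q ^ (?n - g) else 0)"
      by (rule sum.cong[OF refl]) (rule img_big[OF W V t1 tn], auto)
    also have "\<dots> = (if ?ok1 then (\<Sum>g\<in>{Suc ?m..<?n}. ?Q ^ (?n - g)) else 0)" by simp
    also have "(\<Sum>g\<in>{Suc ?m..<?n}. ?Q ^ (?n - g)) = (\<Sum>i\<in>{1..<?n - ?m}. ?Q ^ i)"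
      by (rule reindex_pow) simp
    also have "?n - ?m = t" using tn by simp
    finally show ?thesis .
  qed
  have small: "(\<Sum>g\<in>{1..?m}. (of_nat (card (phi W g ` Ag W V t g)) :: complex))
      = (if ?ok0 then ?Q ^ t else 0)"
  proof -
    have "(\<Sum>g\<in>{1..?m}. (of_nat (card (phi W g ` Ag W V t g)) :: complex))
        = (\<Sum>g\<in>{1..?m}. if ?ok0 then (Gf W V (if g < ?m then ?a g - 1 else ?n) - Gf W V (?a (g - 1))) / ?Q ^ g else 0)"
      by (rule sum.cong[OF refl]) (rule img_small[OF W V t1 tn], auto)
    also have "\<dots> = (if ?ok0 then (\<Sum>g\<in>{1..?m}. (Gf W V (if g < ?m then ?a g - 1 else ?n) - Gf W V (?a (g - 1))) / ?Q ^ g) else 0)"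
      by simp
    also have "(\<Sum>g\<in>{1..?m}. (Gf W V (if g < ?m then ?a g - 1 else ?n) - Gf W V (?a (g - 1))) / ?Q ^ g)
        = Gf W V ?n / ?Q ^ ?m"
    proof (rule telesc[OF Q_facts(1)[OF W V t1 tn] m1])
      fix g assume g: "1 \<le> g" "g < ?m"
      have gn: "g < ?n" using g mn by simp
      have a1: "1 \<le> ?a g" using jdx_pos[OF V] flag_not0[OF W g(1)] gn by simp
      have an: "?a g \<le> ?n" using jdx_le_n[OF V] by simp
      show "Gf W V (?a g - 1) = Gf W V (?a g) / ?Q"
      proof (cases "V (?a g) \<subseteq> ?H")
        case True
        moreover have "V (?a g - 1) \<subseteq> V (?a g)" using fl_mono[OF V] an by simp
        ultimately show ?thesis unfolding Gf_def[OF W V t1 tn] by auto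
      next
        case False
        then have "\<not> V (?a g - 1) \<subseteq> ?H" using key_P[OF W V g(1) gn] by simp
        moreover have "?Q ^ (?a g - 1) = ?Q ^ ?a g / ?Q"
          using a1 Q_facts[OF W V t1 tn] by (cases "?a g") auto
        ultimately show ?thesis using False unfolding Gf_def[OF W V t1 tn] by simp
      qed
    next
      show "Gf W V (?a 0) = 0"
        unfolding Gf_def[OF W V t1 tn] jdx_W0[OF V W] fl_0[OF V]
        using vec.subspace_0[OF fl_subspace[OF W, of "?n - 1"]] by simp
    qed
    also have "Gf W V ?n = ?Q ^ ?n"
    proof -
      have "\<not> V ?n \<subseteq> ?H"
      proof
        assume "V ?n \<subseteq> ?H"
        then have "?H = UNIV" using fl_n[OF V] by auto
        then have "vec.dim ?H = ?n" using vec_dim_card by simp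
        then show False using fl_dim[OF W, of "?n - 1"] n2 by simp
      qed
      then show ?thesis unfolding Gf_def[OF W V t1 tn] by simp
    qed
    also have "?Q ^ ?n / ?Q ^ ?m = ?Q ^ t"
    proof -
      have "?n = t + ?m" using tn by simp
      then have "?Q ^ ?n = ?Q ^ t * ?Q ^ ?m" by (metis power_add)
      then show ?thesis using Q_facts[OF W V t1 tn] by simp
    qed
    finally show ?thesis .
  qed
  have geo: "(\<Sum>i<t. ?Q ^ i) = 1 + (\<Sum>i\<in>{1..<t}. ?Q ^ i)"
  proof -
    have "{..<t} = insert 0 {1..<t}" using t1 by auto
    then show ?thesis by simp
  qed
  have "hconv hf1 (hft t) W V = of_nat (card Mw) + (\<Sum>g\<in>{1..<?n}. (of_nat (card (phi W g ` Ag W V t g)) :: complex))"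
    using S1 S3 by simp
  also have "\<dots> = (if ?ok1 then 1 else 0) + (if ?ok0 then ?Q ^ t else 0) + (if ?ok1 then (\<Sum>i\<in>{1..<t}. ?Q ^ i) else 0)"
    using sum_split big small unfolding Mw_def by simp
  also have "\<dots> = (\<Sum>i<t. ?Q ^ i) * hft t W V + ?Q ^ t * hft (t + 1) W V"
    unfolding hft1 hft0 geo by simp
  finally show ?thesis .
qed


end
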